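(* Let $\mathcal T^{(1)},\mathcal T^{(2)}$ be Galton–Watson trees as below and suppose $\Phi_1\le\Phi_2$, i.e. $\Phi_1(t)\le\Phi_2(t)$ for all $t\in(0,1)$. Then: (a) if $\alpha<0$, then $\mu_1(\alpha)\le\mu_2(\alpha)$; (b) if $0<\alpha<\tfrac12$, then $\mu_1(\alpha)\ge\mu_2(\alpha)$; (c) $\mu_1'\ge\mu_2'$.
   Context: For $j=1,2$, let $\xi_j$ be a random variable with values in $\{0,1,2,\dots\}$ with $\mathbb E\xi_j=1$ and $0<\operatorname{Var}\xi_j<\infty$, with probability generating function $\Phi_j(t)=\mathbb E t^{\xi_j}$, and let $\mathcal T^{(j)}$ be a Galton–Watson tree with offspring distribution $\xi_j$. For real $\alpha<1/2$, $\mu_j(\alpha):=\mathbb E|\mathcal T^{(j)}|^\alpha$ and $\mu_j':=\mathbb E\log|\mathcal T^{(j)}|$, where $|\cdot|$ is the number of vertices. *)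

theory Defs
  imports "HOL-Probability.Probability"
begin

definition pgf :: "nat pmf \<Rightarrow> real \<Rightarrow> real" where
  "pgf p t = (\<Sum>k. pmf p k * t ^ k)"

text \<open>Law of the total size of a Galton--Watson tree, via the branching recursion
  |T| = 1 + |T_1| + ... + |T_xi|, with T_i i.i.d. copies of T independent of xi:
  P(|T| = m+1) = sum_k P(xi = k) * sum over (n_1,..,n_k) with n_i >= 1, sum n_i = m
  of prod_i P(|T| = n_i).  The operator below computes the right-hand side;
  since the value at n only depends on values at indices < n, iterating it
  n+1 times from 0 gives P(|T| = n).\<close>
definition gw_step :: "nat pmf \<Rightarrow> (nat \<Rightarrow> real) \<Rightarrow> nat \<Rightarrow> real" where
  "gw_step p q n = (case n of 0 \<Rightarrow> 0
     | Suc m \<Rightarrow> (\<Sum>k\<le>m. pmf p k *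
          (\<Sum>xs\<in>{xs. length xs = k \<and> sum_list xs = m \<and> (\<forall>x\<in>set xs. 1 \<le> x)}.
              prod_list (map q xs))))"

definition gw_size_prob :: "nat pmf \<Rightarrow> nat \<Rightarrow> real" where
  "gw_size_prob p n = ((gw_step p ^^ Suc n) (\<lambda>_. 0)) n"

definition gw_mu :: "nat pmf \<Rightarrow> real \<Rightarrow> real" where
  "gw_mu p \<alpha> = (\<Sum>n. gw_size_prob p n * real n powr \<alpha>)"

definition gw_mu' :: "nat pmf \<Rightarrow> real" where
  "gw_mu' p = (\<Sum>n. gw_size_prob p n * ln (real n))"

definition critical_finvar :: "nat pmf \<Rightarrow> bool" where
  "critical_finvar p \<longleftrightarrow>
     integrable (measure_pmf p) (\<lambda>k. (real k)^2) \<and>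
     measure_pmf.expectation p real = 1 \<and>
     measure_pmf.variance p real > 0"

end

theory Submission
  imports Defs "HOL-Analysis.Analysis"
begin

abbreviation FF :: "nat pmf \<Rightarrow> nat \<Rightarrow> nat \<Rightarrow> real" where
  "FF p j \<equiv> (gw_step p ^^ j) (\<lambda>_. 0)"

lemma prod_list_map_nonneg: "(\<And>n. 0 \<le> (a::nat\<Rightarrow>real) n) \<Longrightarrow> 0 \<le> prod_list (map a xs)"
  by (induction xs) auto

lemma prod_list_map_mono:
  "(\<And>n. 0 \<le> (a::nat\<Rightarrow>real) n) \<Longrightarrow> (\<And>n. a n \<le> b n) \<Longrightarrow> prod_list (map a xs) \<le> prod_list (map b xs)"
proof (induction xs)
  case (Cons x xs)
  have "a x * prod_list (map a xs) \<le> b x * prod_list (map b xs)"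
  proof (rule mult_mono)
    show "0 \<le> b x" using Cons.prems(1,2)[of x] by linarith
  qed (use Cons prod_list_map_nonneg in auto)
  then show ?case by simp
qed simp

lemma gw_step_nonneg: "(\<And>n. 0 \<le> a n) \<Longrightarrow> 0 \<le> gw_step p a n"
  unfolding gw_step_def
  by (auto split: nat.split intro!: sum_nonneg mult_nonneg_nonneg prod_list_map_nonneg)

lemma gw_step_mono: "(\<And>n. 0 \<le> a n) \<Longrightarrow> (\<And>n. a n \<le> b n) \<Longrightarrow> gw_step p a n \<le> gw_step p b n"
  unfolding gw_step_def
  by (auto split: nat.split intro!: sum_mono mult_left_mono prod_list_map_mono)

lemma gw_step_0[simp]: "gw_step p a 0 = 0"
  by (simp add: gw_step_def)

lemma gw_step_local:
  assumes "\<And>k. k < n \<Longrightarrow> a k = b k"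
  shows "gw_step p a n = gw_step p b n"
proof (cases n)
  case (Suc m)
  have "prod_list (map a xs) = prod_list (map b xs)"
    if "xs \<in> {xs. length xs = k \<and> sum_list xs = m \<and> (\<forall>x\<in>set xs. 1 \<le> x)}" for xs k
  proof -
    have "\<And>x. x \<in> set xs \<Longrightarrow> a x = b x"
      using that member_le_sum_list[of _ xs] assms Suc by fastforce
    then show ?thesis by (metis map_cong)
  qed
  then show ?thesis unfolding gw_step_def Suc by (auto intro!: sum.cong)
qed (simp add: gw_step_def)

lemma FF_nonneg: "0 \<le> FF p j n"
  by (induction j arbitrary: n) (auto intro!: gw_step_nonneg)

lemma FF_0[simp]: "FF p j 0 = 0"
  by (cases j) auto

lemma FF_mono_Suc: "FF p j n \<le> FF p (Suc j) n"
proof (induction j arbitrary: n)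
  case 0 then show ?case using FF_nonneg[where p=p and j=1 and n=n] by simp
next
  case (Suc j)
  then show ?case by (auto intro!: gw_step_mono FF_nonneg)
qed

lemma FF_mono: "j \<le> j' \<Longrightarrow> FF p j n \<le> FF p j' n"
proof (induction j' rule: dec_induct)
  case (step m) then show ?case using FF_mono_Suc[where p=p and j=m and n=n] by linarith
qed simp

lemma FF_agree: "n < j \<Longrightarrow> FF p j n = FF p (Suc j) n"
proof (induction j arbitrary: n)
  case (Suc j)
  have "gw_step p (FF p j) n = gw_step p (FF p (Suc j)) n"
    by (rule gw_step_local) (use Suc in auto)
  then show ?case by simp
qed simp

lemma FF_stable: "n < j \<Longrightarrow> FF p (j + i) n = FF p j n"
proof (induction i)
  case (Suc i)
  then show ?case using FF_agree[where n=n and j="j+i" and p=p] by simp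
qed simp

lemma q_FF: "gw_size_prob p n = FF p (Suc n) n"
  by (simp add: gw_size_prob_def del: funpow.simps)

lemma FF_eq_q: "n < j \<Longrightarrow> FF p j n = gw_size_prob p n"
  using FF_stable[where n=n and j="Suc n" and p=p and i="j - Suc n"] by (simp add: q_FF)

lemma FF_le_q: "FF p j n \<le> gw_size_prob p n"
proof -
  have "FF p j n \<le> FF p (max j (Suc n)) n" by (rule FF_mono) simp
  also have "\<dots> = gw_size_prob p n" by (rule FF_eq_q) simp
  finally show ?thesis .
qed

lemma q_nonneg: "0 \<le> gw_size_prob p n"
  by (simp add: q_FF FF_nonneg del: funpow.simps)

lemma q_0[simp]: "gw_size_prob p 0 = 0"
  by (simp add: q_FF del: funpow.simps)

definition comps :: "nat \<Rightarrow> nat \<Rightarrow> nat list set" where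
  "comps k m = {xs. length xs = k \<and> sum_list xs = m \<and> (\<forall>x\<in>set xs. 1 \<le> x)}"

definition cc :: "(nat \<Rightarrow> real) \<Rightarrow> nat \<Rightarrow> nat \<Rightarrow> real" where
  "cc a k m = (\<Sum>xs\<in>comps k m. prod_list (map a xs))"

lemma gw_step_Suc: "gw_step p a (Suc m) = (\<Sum>k\<le>m. pmf p k * cc a k m)"
  by (simp add: gw_step_def cc_def comps_def)

lemma finite_comps: "finite (comps k m)"
proof -
  have "comps k m \<subseteq> {xs. set xs \<subseteq> {..m} \<and> length xs = k}"
    unfolding comps_def using member_le_sum_list by fastforce
  moreover have "finite {xs. set xs \<subseteq> {..m} \<and> length xs = k}"
    by (rule finite_lists_length_eq) simp
  ultimately show ?thesis by (rule finite_subset)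
qed

lemma length_le_sum_list: "(\<forall>x\<in>set xs. 1 \<le> (x::nat)) \<Longrightarrow> length xs \<le> sum_list xs"
  by (induction xs) auto

lemma comps_empty: "m < k \<Longrightarrow> comps k m = {}"
  unfolding comps_def using length_le_sum_list by fastforce

lemma comps_0: "comps 0 m = (if m = 0 then {[]} else {})"
  unfolding comps_def by auto

lemma comps_Suc: "comps (Suc k) m = (\<lambda>(x,xs). x # xs) ` (SIGMA x:{1..m}. comps k (m - x))"
proof (intro equalityI subsetI)
  fix ys assume "ys \<in> comps (Suc k) m"
  then obtain x xs where ys: "ys = x # xs" and "length xs = k" "x + sum_list xs = m" "1 \<le> x"
    "\<forall>y\<in>set xs. 1 \<le> y"
    unfolding comps_def by (cases ys) auto
  then show "ys \<in> (\<lambda>(x,xs). x # xs) ` (SIGMA x:{1..m}. comps k (m - x))"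
    unfolding comps_def by (auto intro!: image_eqI[of _ _ "(x,xs)"])
next
  fix ys assume "ys \<in> (\<lambda>(x,xs). x # xs) ` (SIGMA x:{1..m}. comps k (m - x))"
  then show "ys \<in> comps (Suc k) m" unfolding comps_def by auto
qed

lemma cc_0: "cc a 0 m = (if m = 0 then 1 else 0)"
  by (simp add: cc_def comps_0)

lemma cc_empty: "m < k \<Longrightarrow> cc a k m = 0"
  by (simp add: cc_def comps_empty)

lemma cc_Suc: "cc a (Suc k) m = (\<Sum>x=1..m. a x * cc a k (m - x))"
proof -
  have inj: "inj_on (\<lambda>(x,xs). x # xs) (SIGMA x:{1..m}. comps k (m - x))"
    by (auto simp: inj_on_def)
  have "cc a (Suc k) m = (\<Sum>(x,xs)\<in>(SIGMA x:{1..m}. comps k (m - x)). prod_list (map a (x#xs)))"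
    unfolding cc_def comps_Suc by (subst sum.reindex[OF inj]) (simp add: case_prod_unfold)
  also have "\<dots> = (\<Sum>x=1..m. \<Sum>xs\<in>comps k (m-x). a x * prod_list (map a xs))"
    by (subst sum.Sigma[symmetric]) (auto simp: finite_comps)
  also have "\<dots> = (\<Sum>x=1..m. a x * cc a k (m - x))"
    by (simp add: cc_def sum_distrib_left)
  finally show ?thesis .
qed

lemma cc_Suc': "a 0 = 0 \<Longrightarrow> cc a (Suc k) m = (\<Sum>x\<le>m. a x * cc a k (m - x))"
proof -
  assume a0: "a 0 = 0"
  have "{..m} = insert 0 {1..m}" by auto
  then show ?thesis by (simp add: cc_Suc a0)
qed

lemma cc_nonneg: "(\<And>n. 0 \<le> a n) \<Longrightarrow> 0 \<le> cc a k m"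
  unfolding cc_def by (auto intro!: sum_nonneg prod_list_map_nonneg)

lemma cc_sums:
  assumes s: "0 \<le> s" and a: "\<And>n. 0 \<le> a n" and a0: "a 0 = 0"
    and sa: "summable (\<lambda>n. a n * s ^ n)"
  shows "(\<lambda>m. cc a k m * s ^ m) sums ((\<Sum>n. a n * s ^ n) ^ k)"
proof (induction k)
  case 0
  have "(\<lambda>m. cc a 0 m * s ^ m) = (\<lambda>m. if m = 0 then (\<lambda>_. 1::real) m else 0)"
    by (auto simp: cc_0)
  then show ?case using sums_single[of 0 "\<lambda>_. 1::real"] by simp
next
  case (Suc k)
  have "(\<lambda>m. \<Sum>i\<le>m. (a i * s ^ i) * (cc a k (m - i) * s ^ (m - i))) sums
          ((\<Sum>n. a n * s ^ n) * (\<Sum>n. cc a k n * s ^ n))"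
    by (rule Cauchy_product_sums)
       (use sa Suc.IH s a in \<open>auto simp: sums_iff cc_nonneg intro!: summable_norm_cancel[where f=undefined] \<close>)
  moreover have "(\<Sum>i\<le>m. (a i * s ^ i) * (cc a k (m - i) * s ^ (m - i))) = cc a (Suc k) m * s ^ m" for m
  proof -
    have "(\<Sum>i\<le>m. (a i * s ^ i) * (cc a k (m - i) * s ^ (m - i))) = (\<Sum>i\<le>m. (a i * cc a k (m - i)) * s ^ m)"
      by (intro sum.cong refl) (simp add: power_add[symmetric])
    then show ?thesis by (simp add: cc_Suc'[where a=a, OF a0] sum_distrib_right)
  qed
  moreover have "(\<Sum>n. cc a k n * s ^ n) = (\<Sum>n. a n * s ^ n) ^ k" using Suc.IH by (simp add: sums_iff)
  ultimately show ?case by simp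
qed

lemma ennreal_sums:
  assumes f: "\<And>i. 0 \<le> f i" and eq: "(\<Sum>i. ennreal (f i)) = ennreal x" and x: "0 \<le> x"
  shows "f sums x"
proof -
  have sf: "summable f" by (rule summable_suminf_not_top) (use f eq in auto)
  have "ennreal (suminf f) = ennreal x" using suminf_ennreal2[OF f sf] eq by simp
  then have "suminf f = x" using x suminf_nonneg[OF sf f] by simp
  then show ?thesis using sf by (simp add: sums_iff)
qed

lemma pmf_sums1: "(\<lambda>k. pmf p k) sums (1::real)" for p :: "nat pmf"
proof (rule ennreal_sums)
  show "(\<Sum>k. ennreal (pmf p k)) = ennreal 1"
    using nn_integral_count_space_nat[of "\<lambda>k. ennreal (pmf p k)"] nn_integral_pmf[where p=p and A=UNIV] by simp
qed auto

lemma pgf_sums: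
  assumes "0 \<le> t" "t \<le> 1"
  shows "(\<lambda>k. pmf p k * t ^ k) sums pgf p t"
proof -
  have "summable (\<lambda>k. pmf p k * t ^ k)"
  proof (rule summable_comparison_test)
    show "\<exists>N. \<forall>n\<ge>N. norm (pmf p n * t ^ n) \<le> pmf p n"
      using assms by (auto intro!: exI[of _ 0] mult_left_le power_le_one)
  qed (use pmf_sums1 in \<open>auto simp: sums_iff\<close>)
  then show ?thesis by (simp add: pgf_def summable_sums)
qed

lemma pgf_nonneg: "0 \<le> t \<Longrightarrow> t \<le> 1 \<Longrightarrow> 0 \<le> pgf p t"
proof -
  assume t: "0 \<le> t" "t \<le> 1"
  show ?thesis
    by (rule sums_le[OF _ sums_zero pgf_sums[OF t]]) (use t in simp)
qed

lemma pgf_le1: "0 \<le> t \<Longrightarrow> t \<le> 1 \<Longrightarrow> pgf p t \<le> 1"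
proof -
  assume t: "0 \<le> t" "t \<le> 1"
  show ?thesis
  proof (rule sums_le[OF _ pgf_sums[OF t] pmf_sums1])
    fix n show "pmf p n * t ^ n \<le> pmf p n"
      using t by (simp add: mult_left_le power_le_one)
  qed
qed

lemma pgf_mono: "0 \<le> t \<Longrightarrow> t \<le> u \<Longrightarrow> u \<le> 1 \<Longrightarrow> pgf p t \<le> pgf p u"
proof -
  assume t: "0 \<le> t" "t \<le> u" "u \<le> 1"
  show ?thesis
  proof (rule sums_le[OF _ pgf_sums pgf_sums])
    fix n show "pmf p n * t ^ n \<le> pmf p n * u ^ n"
      using t by (simp add: mult_left_mono power_mono)
  qed (use t in auto)
qed

lemma step_sums:
  assumes s: "0 \<le> s" "s \<le> 1" and a: "\<And>n. 0 \<le> a n" and a0: "a 0 = 0"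
    and sa: "(\<lambda>n. a n * s ^ n) sums A" and A1: "A \<le> 1"
  shows "(\<lambda>n. gw_step p a n * s ^ n) sums (s * pgf p A)"
proof -
  have A0: "0 \<le> A" by (rule sums_le[OF _ sums_zero sa]) (use a s in simp)
  have cs: "(\<lambda>m. cc a k m * s ^ m) sums (A ^ k)" for k
    using cc_sums[where a=a and s=s and k=k] s a a0 sa by (simp add: sums_iff)
  have cn: "0 \<le> cc a k m" for k m by (rule cc_nonneg[OF a])
  define T where "T m k = pmf p k * cc a k m * s ^ m" for m k
  have T0: "0 \<le> T m k" for m k unfolding T_def using s by (auto intro!: mult_nonneg_nonneg cn)
  have gT: "gw_step p a (Suc m) * s ^ m = (\<Sum>k\<le>m. T m k)" for m
    by (simp add: gw_step_Suc T_def sum_distrib_right)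
  have "(\<Sum>m. ennreal (\<Sum>k\<le>m. T m k)) = (\<Sum>m. \<Sum>k. ennreal (T m k))"
  proof (intro suminf_cong)
    fix m
    have "(\<Sum>k. ennreal (T m k)) = (\<Sum>k\<le>m. ennreal (T m k))"
      by (rule suminf_finite) (auto simp: T_def cc_empty)
    then show "ennreal (\<Sum>k\<le>m. T m k) = (\<Sum>k. ennreal (T m k))" using T0 by simp
  qed
  also have "\<dots> = (\<Sum>k. \<Sum>m. ennreal (T m k))"
  proof -
    have "(\<Sum>m. \<Sum>k. ennreal (T m k)) = (\<integral>\<^sup>+m. (\<Sum>k. ennreal (T m k)) \<partial>count_space UNIV)"
      by (simp add: nn_integral_count_space_nat)
    also have "\<dots> = (\<Sum>k. \<integral>\<^sup>+m. ennreal (T m k) \<partial>count_space UNIV)"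
      by (rule nn_integral_suminf) simp
    also have "\<dots> = (\<Sum>k. \<Sum>m. ennreal (T m k))"
      by (simp add: nn_integral_count_space_nat)
    finally show ?thesis .
  qed
  also have "\<dots> = (\<Sum>k. ennreal (pmf p k * A ^ k))"
  proof (intro suminf_cong)
    fix k
    have "(\<Sum>m. ennreal (T m k)) = (\<Sum>m. ennreal (pmf p k) * ennreal (cc a k m * s ^ m))"
      using s by (intro suminf_cong) (auto simp: T_def ennreal_mult' cn mult.assoc)
    also have "\<dots> = ennreal (pmf p k) * (\<Sum>m. ennreal (cc a k m * s ^ m))"
      by (rule ennreal_suminf_cmult)
    also have "(\<Sum>m. ennreal (cc a k m * s ^ m)) = ennreal (A ^ k)"
      by (rule suminf_ennreal_eq[OF _ cs]) (use s cn in simp)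
    finally have "(\<Sum>m. ennreal (T m k)) = ennreal (pmf p k) * ennreal (A ^ k)" .
    then show "(\<Sum>m. ennreal (T m k)) = ennreal (pmf p k * A ^ k)"
      by (simp add: ennreal_mult'[symmetric] A0)
  qed
  also have "\<dots> = ennreal (pgf p A)"
    by (rule suminf_ennreal_eq[OF _ pgf_sums[OF A0 A1]]) (use A0 in simp)
  finally have "(\<lambda>m. \<Sum>k\<le>m. T m k) sums pgf p A"
    by (rule ennreal_sums[rotated]) (simp_all add: sum_nonneg T0 pgf_nonneg[OF A0 A1])
  from sums_mult[OF this, of s]
  have "(\<lambda>m. gw_step p a (Suc m) * s ^ Suc m) sums (s * pgf p A)"
    by (simp add: gT[symmetric] mult_ac)
  then show ?thesis using sums_Suc_iff[of "\<lambda>n. gw_step p a n * s ^ n" "s * pgf p A"] by simp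
qed

definition GG :: "nat pmf \<Rightarrow> nat \<Rightarrow> real \<Rightarrow> real" where
  "GG p j s = (\<Sum>n. FF p j n * s ^ n)"

definition YY :: "nat pmf \<Rightarrow> real \<Rightarrow> real" where
  "YY p s = (\<Sum>n. gw_size_prob p n * s ^ n)"

lemma GG_sums_aux:
  assumes s: "0 \<le> s" "s \<le> 1"
  shows "\<exists>A. (\<lambda>n. FF p j n * s ^ n) sums A \<and> A \<le> 1"
proof (induction j)
  case 0 then show ?case by (auto intro!: exI[of _ 0])
next
  case (Suc j)
  then obtain A where A: "(\<lambda>n. FF p j n * s ^ n) sums A" "A \<le> 1" by blast
  have A0: "0 \<le> A" by (rule sums_le[OF _ sums_zero A(1)]) (use s in \<open>simp add: FF_nonneg\<close>)
  have "(\<lambda>n. gw_step p (FF p j) n * s ^ n) sums (s * pgf p A)"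
    by (rule step_sums[OF s _ _ A]) (simp_all add: FF_nonneg)
  moreover have "s * pgf p A \<le> 1"
    using s pgf_le1[where p=p, OF A0 A(2)] pgf_nonneg[where p=p, OF A0 A(2)] by (simp add: mult_le_one)
  ultimately show ?case by auto
qed

lemma GG_sums: "0 \<le> s \<Longrightarrow> s \<le> 1 \<Longrightarrow> (\<lambda>n. FF p j n * s ^ n) sums GG p j s"
  using GG_sums_aux[where s=s and p=p and j=j] by (auto simp: GG_def sums_iff)

lemma GG_le1: "0 \<le> s \<Longrightarrow> s \<le> 1 \<Longrightarrow> GG p j s \<le> 1"
  using GG_sums_aux[where s=s and p=p and j=j] by (auto simp: GG_def sums_iff)

lemma GG_nonneg: "0 \<le> s \<Longrightarrow> s \<le> 1 \<Longrightarrow> 0 \<le> GG p j s"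
  by (rule sums_le[OF _ sums_zero GG_sums]) (simp_all add: FF_nonneg)

lemma GG_0[simp]: "GG p 0 s = 0"
  by (simp add: GG_def)

lemma GG_Suc: "0 \<le> s \<Longrightarrow> s \<le> 1 \<Longrightarrow> GG p (Suc j) s = s * pgf p (GG p j s)"
proof -
  assume s: "0 \<le> s" "s \<le> 1"
  have "(\<lambda>n. gw_step p (FF p j) n * s ^ n) sums (s * pgf p (GG p j s))"
    by (rule step_sums[OF s _ _ GG_sums[OF s] GG_le1[OF s]]) (simp_all add: FF_nonneg)
  moreover have "(\<lambda>n. gw_step p (FF p j) n * s ^ n) sums GG p (Suc j) s"
    using GG_sums[where p=p and j="Suc j", OF s] by simp
  ultimately show ?thesis using sums_unique2 by blast
qed

lemma GG_mono: "0 \<le> s \<Longrightarrow> s \<le> 1 \<Longrightarrow> j \<le> j' \<Longrightarrow> GG p j s \<le> GG p j' s"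
  by (rule sums_le[OF _ GG_sums GG_sums]) (simp_all add: FF_mono mult_right_mono)

lemma partial_le_GG:
  assumes s: "0 \<le> s" "s \<le> 1"
  shows "(\<Sum>n<N. gw_size_prob p n * s ^ n) \<le> GG p N s"
proof -
  have "(\<Sum>n<N. gw_size_prob p n * s ^ n) = (\<Sum>n<N. FF p N n * s ^ n)"
    by (intro sum.cong refl) (simp add: FF_eq_q)
  also have "\<dots> \<le> GG p N s"
    unfolding GG_def
    by (rule sum_le_suminf) (use GG_sums[where p=p and j=N, OF s] s in \<open>auto simp: sums_iff FF_nonneg\<close>)
  finally show ?thesis .
qed

lemma YY_summable: "0 \<le> s \<Longrightarrow> s \<le> 1 \<Longrightarrow> summable (\<lambda>n. gw_size_prob p n * s ^ n)"
  by (rule summableI_nonneg_bounded[where x=1])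
     (auto intro: order_trans[OF partial_le_GG GG_le1] simp: q_nonneg)

lemma YY_sums: "0 \<le> s \<Longrightarrow> s \<le> 1 \<Longrightarrow> (\<lambda>n. gw_size_prob p n * s ^ n) sums YY p s"
  using YY_summable by (simp add: YY_def summable_sums)

lemma YY_le1: "0 \<le> s \<Longrightarrow> s \<le> 1 \<Longrightarrow> YY p s \<le> 1"
  unfolding YY_def
  by (rule suminf_le_const[OF YY_summable]) (auto intro: order_trans[OF partial_le_GG GG_le1])

lemma YY_nonneg: "0 \<le> s \<Longrightarrow> s \<le> 1 \<Longrightarrow> 0 \<le> YY p s"
  by (rule sums_le[OF _ sums_zero YY_sums]) (simp_all add: q_nonneg)

lemma GG_le_YY: "0 \<le> s \<Longrightarrow> s \<le> 1 \<Longrightarrow> GG p j s \<le> YY p s"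
  by (rule sums_le[OF _ GG_sums YY_sums]) (simp_all add: FF_le_q mult_right_mono)

lemma GG_lim: 
  assumes s: "0 \<le> s" "s \<le> 1"
  shows "(\<lambda>j. GG p j s) \<longlonglongrightarrow> YY p s"
proof (rule increasing_LIMSEQ)
  fix n show "GG p n s \<le> GG p (Suc n) s" by (rule GG_mono[OF s]) simp
next
  fix n show "GG p n s \<le> YY p s" by (rule GG_le_YY[OF s])
next
  fix e :: real assume e: "0 < e"
  have "(\<lambda>N. \<Sum>n<N. gw_size_prob p n * s ^ n) \<longlonglongrightarrow> YY p s"
    using YY_sums[OF s] by (simp add: sums_def)
  then obtain N where "\<bar>(\<Sum>n<N. gw_size_prob p n * s ^ n) - YY p s\<bar> < e"
    using e by (auto simp: LIMSEQ_def dist_real_def)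
  then show "\<exists>n. YY p s \<le> GG p n s + e"
    using partial_le_GG[where N=N and p=p, OF s] by (intro exI[of _ N]) linarith
qed

lemma YY_fix_ge:
  assumes s: "0 \<le> s" "s \<le> 1"
  shows "s * pgf p (YY p s) \<le> YY p s"
proof -
  have Y: "0 \<le> YY p s" "YY p s \<le> 1" using YY_nonneg[OF s] YY_le1[OF s] by auto
  have sm: "(\<lambda>k. s * (pmf p k * YY p s ^ k)) sums (s * pgf p (YY p s))"
    by (rule sums_mult[OF pgf_sums[OF Y]])
  have "s * pgf p (YY p s) \<le> YY p s"
    unfolding sums_unique[OF sm]
  proof (rule suminf_le_const[OF sums_summable[OF sm]])
    fix K
    have lim: "(\<lambda>j. \<Sum>k<K. s * (pmf p k * GG p j s ^ k)) \<longlonglongrightarrow> (\<Sum>k<K. s * (pmf p k * YY p s ^ k))"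
      by (intro tendsto_intros GG_lim[OF s])
    show "(\<Sum>k<K. s * (pmf p k * YY p s ^ k)) \<le> YY p s"
    proof (rule LIMSEQ_le_const2[OF lim], intro exI allI impI)
      fix j
      have G: "0 \<le> GG p j s" "GG p j s \<le> 1" using GG_nonneg[OF s] GG_le1[OF s] by auto
      have "(\<Sum>k<K. s * (pmf p k * GG p j s ^ k)) \<le> (\<Sum>k. s * (pmf p k * GG p j s ^ k))"
        by (rule sum_le_suminf) (use sums_summable[OF sums_mult[OF pgf_sums[OF G]]] s G in auto)
      also have "\<dots> = s * pgf p (GG p j s)"
        using sums_unique[OF sums_mult[OF pgf_sums[OF G], of s]] by simp
      also have "\<dots> = GG p (Suc j) s" by (simp add: GG_Suc[OF s])
      also have "\<dots> \<le> YY p s" by (rule GG_le_YY[OF s])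
      finally show "(\<Sum>k<K. s * (pmf p k * GG p j s ^ k)) \<le> YY p s" .
    qed
  qed
  then show ?thesis .
qed

lemma crit_mean:
  assumes "critical_finvar p"
  shows "(\<lambda>k. pmf p k * real k) sums 1"
proof -
  have E: "measure_pmf.expectation p real = 1" using assms by (simp add: critical_finvar_def)
  have int: "integrable (measure_pmf p) real"
    using E not_integrable_integral_eq by fastforce
  have "(\<integral>\<^sup>+k. ennreal (real k) \<partial>measure_pmf p) = ennreal (measure_pmf.expectation p real)"
    by (rule nn_integral_eq_integral[OF int]) simp
  then have "(\<Sum>k. ennreal (pmf p k * real k)) = ennreal 1"
    by (simp add: E nn_integral_measure_pmf nn_integral_count_space_nat ennreal_mult')
  then show ?thesis by (rule ennreal_sums[rotated]) auto
qed

lemma hk: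
  fixes u :: real
  assumes u: "0 \<le> u" "u \<le> 1" and k: "2 \<le> k"
  shows "u ^ 2 \<le> (1 - u) ^ k - 1 + real k * u"
  using k
proof (induction k rule: dec_induct)
  case base then show ?case by (simp add: power2_eq_square algebra_simps)
next
  case (step k)
  have "(1 - u) ^ k \<le> 1" using u by (simp add: power_le_one)
  then have "0 \<le> u * (1 - (1 - u) ^ k)" using u by simp
  moreover have "(1 - u) ^ Suc k - 1 + real (Suc k) * u = ((1 - u) ^ k - 1 + real k * u) + u * (1 - (1 - u) ^ k)"
    by (simp add: algebra_simps)
  ultimately show ?case using step.IH by linarith
qed

lemma hk0:
  fixes u :: real
  assumes u: "0 \<le> u" "u \<le> 1"
  shows "0 \<le> (1 - u) ^ k - 1 + real k * u"
proof (cases "2 \<le> k")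
  case True then show ?thesis using hk[OF u True] by (smt (verit) zero_le_power2)
next
  case False then have "k = 0 \<or> k = 1" by auto
  then show ?thesis by auto
qed

definition cst :: "nat pmf \<Rightarrow> real" where "cst p = 1 - pmf p 0 - pmf p 1"

lemma tail_sums: "(\<lambda>k. if 2 \<le> k then pmf p k else 0) sums cst p"
proof -
  have "(\<lambda>k. pmf p k - (if k = 0 then pmf p k else 0) - (if k = 1 then pmf p k else 0)) sums (1 - pmf p 0 - pmf p 1)"
    by (intro sums_diff pmf_sums1 sums_single)
  moreover have "(\<lambda>k. pmf p k - (if k = 0 then pmf p k else 0) - (if k = 1 then pmf p k else 0)) = (\<lambda>k. if 2 \<le> k then pmf p k else 0)"
    by (auto simp: fun_eq_iff)
  ultimately show ?thesis by (simp add: cst_def)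
qed

lemma pgf_lower:
  assumes mean: "(\<lambda>k. pmf p k * real k) sums 1" and t: "0 \<le> t" "t \<le> 1"
  shows "t + cst p * (1 - t) ^ 2 \<le> pgf p t"
proof -
  have s1: "(\<lambda>k. pmf p k * t ^ k - pmf p k + pmf p k * real k * (1 - t)) sums (pgf p t - 1 + 1 * (1 - t))"
    by (intro sums_add sums_diff pgf_sums t pmf_sums1 sums_mult2 mean)
  have s2: "(\<lambda>k. (if 2 \<le> k then pmf p k else 0) * (1 - t) ^ 2) sums (cst p * (1 - t) ^ 2)"
    by (intro sums_mult2 tail_sums)
  have "cst p * (1 - t) ^ 2 \<le> pgf p t - 1 + 1 * (1 - t)"
  proof (rule sums_le[OF _ s2 s1])
    fix k
    have u: "0 \<le> 1 - t" "1 - t \<le> 1" using t by auto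
    have eq: "pmf p k * t ^ k - pmf p k + pmf p k * real k * (1 - t) = pmf p k * ((1 - (1 - t)) ^ k - 1 + real k * (1 - t))"
      by (simp add: algebra_simps)
    show "(if 2 \<le> k then pmf p k else 0) * (1 - t) ^ 2 \<le> pmf p k * t ^ k - pmf p k + pmf p k * real k * (1 - t)"
      unfolding eq using hk[OF u, of k] hk0[OF u, of k]
      by (auto intro!: mult_left_mono)
  qed
  then show ?thesis by simp
qed

lemma cst_pos:
  assumes crit: "critical_finvar p"
  shows "0 < cst p"
proof (rule ccontr)
  assume "\<not> 0 < cst p"
  then have c0: "cst p \<le> 0" by simp
  have g0: "(if 2 \<le> k then pmf p k else 0) = 0" for k
  proof -
    have "(\<Sum>i\<in>{k}. if 2 \<le> i then pmf p i else 0) \<le> (\<Sum>i. if 2 \<le> i then pmf p i else 0)"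
      by (rule sum_le_suminf) (use sums_summable[OF tail_sums] in auto)
    then have "(if 2 \<le> k then pmf p k else 0) \<le> 0" using c0 sums_unique[OF tail_sums[of p]] by simp
    moreover have "0 \<le> (if 2 \<le> k then pmf p k else 0)" by simp
    ultimately show ?thesis by linarith
  qed
  have "(\<lambda>k. pmf p k * real k) = (\<lambda>k. if k = 1 then pmf p 1 else 0)"
  proof
    fix k show "pmf p k * real k = (if k = 1 then pmf p 1 else 0)"
      using g0[of k] by (cases "k = 0 \<or> k = 1") (auto split: if_splits)
  qed
  then have "(\<lambda>k. if k = 1 then pmf p 1 else 0) sums 1" using crit_mean[OF crit] by simp
  moreover have "(\<lambda>k. if k = 1 then pmf p 1 else 0) sums pmf p 1" using sums_single[of 1 "\<lambda>_. pmf p 1"] by simp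
  ultimately have p1: "pmf p 1 = 1" using sums_unique2 by blast
  have "cst p = 0"
  proof -
    have "(\<lambda>k. if 2 \<le> k then pmf p k else 0) = (\<lambda>_. 0)" using g0 by auto
    then show ?thesis using tail_sums[of p] sums_zero sums_unique2 by metis
  qed
  then have p0: "pmf p 0 = 0" using p1 by (simp add: cst_def)
  have "p = return_pmf 1"
  proof (rule pmf_eqI)
    fix i show "pmf p i = pmf (return_pmf 1) i"
      using g0[of i] p0 p1 by (cases "i = 0 \<or> i = 1") (auto split: if_splits)
  qed
  then have "measure_pmf.variance p real = 0" by simp
  then show False using crit by (simp add: critical_finvar_def)
qed

lemma YY_one:
  assumes crit: "critical_finvar p"
  shows "YY p 1 = 1"
proof -
  have Y: "0 \<le> YY p 1" "YY p 1 \<le> 1" using YY_nonneg YY_le1 by auto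
  have "YY p 1 + cst p * (1 - YY p 1) ^ 2 \<le> pgf p (YY p 1)"
    by (rule pgf_lower[OF crit_mean[OF crit] Y])
  moreover have "pgf p (YY p 1) \<le> YY p 1" using YY_fix_ge[of 1 p] by simp
  ultimately have "cst p * (1 - YY p 1) ^ 2 \<le> 0" by linarith
  then have "(1 - YY p 1) ^ 2 \<le> 0" using cst_pos[OF crit] by (simp add: mult_le_0_iff)
  then show ?thesis by simp
qed

lemma q_sums1:
  assumes crit: "critical_finvar p"
  shows "(\<lambda>n. gw_size_prob p n) sums 1"
  using YY_sums[of 1 p] YY_one[OF crit] by simp

definition KK :: "nat pmf \<Rightarrow> real" where "KK p = max 2 (2 / cst p)"

lemma YY_bound:
  assumes crit: "critical_finvar p" and s: "0 < s" "s \<le> 1"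
  shows "(1 - YY p s) ^ 2 \<le> KK p * (1 - s)"
proof -
  define Y where "Y = YY p s"
  define c where "c = cst p"
  have c: "0 < c" using cst_pos[OF crit] by (simp add: c_def)
  have Y01: "0 \<le> Y" "Y \<le> 1" using YY_nonneg[of s p] YY_le1[of s p] s by (auto simp: Y_def)
  have "Y + c * (1 - Y) ^ 2 \<le> pgf p Y"
    unfolding c_def by (rule pgf_lower[OF crit_mean[OF crit] Y01])
  moreover have "s * pgf p Y \<le> Y" unfolding Y_def by (rule YY_fix_ge) (use s in auto)
  ultimately have "s * (Y + c * (1 - Y) ^ 2) \<le> Y"
    using s by (smt (verit) mult_left_mono)
  then have "s * c * (1 - Y) ^ 2 \<le> Y * (1 - s)" by (simp add: algebra_simps)
  also have "\<dots> \<le> 1 - s" using Y01 s by (simp add: mult_left_le_one_le)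
  finally have main: "s * c * (1 - Y) ^ 2 \<le> 1 - s" .
  have u: "(1 - Y) ^ 2 \<le> 1" using Y01 by (simp add: power_le_one)
  have K: "2 \<le> KK p" "2 / c \<le> KK p" by (auto simp: KK_def c_def)
  show ?thesis
  proof (cases "s < 1/2")
    case True
    then have "1 \<le> 2 * (1 - s)" by simp
    then have "(1 - Y) ^ 2 \<le> 2 * (1 - s)" using u by (rule order_trans[rotated])
    also have "\<dots> \<le> KK p * (1 - s)" using K s by (intro mult_right_mono) auto
    finally show ?thesis by (simp add: Y_def)
  next
    case False
    have "c / 2 * (1 - Y) ^ 2 \<le> s * c * (1 - Y) ^ 2"
      using False c by (intro mult_right_mono) auto
    then have "c / 2 * (1 - Y) ^ 2 \<le> 1 - s" using main by linarith
    then have "(1 - Y) ^ 2 \<le> (2 / c) * (1 - s)" using c by (simp add: field_simps)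
    also have "\<dots> \<le> KK p * (1 - s)" using K s by (intro mult_right_mono) auto
    finally show ?thesis by (simp add: Y_def)
  qed
qed

lemma pgf0_pos: "critical_finvar p \<Longrightarrow> 0 < pgf p 0"
  using pgf_lower[OF crit_mean, of p 0] cst_pos[of p] by simp

lemma GG_compare:
  assumes crit2: "critical_finvar p2" and le: "\<forall>t\<in>{0<..<1}. pgf p1 t \<le> pgf p2 t"
    and s: "0 < s" "s < 1"
  shows "GG p1 j s \<le> GG p2 (Suc j) s"
proof (induction j)
  case 0 then show ?case using GG_nonneg[of s p2 1] s by simp
next
  case (Suc j)
  have s': "0 \<le> s" "s \<le> 1" using s by auto
  let ?t = "GG p2 (Suc j) s"
  have t0: "0 < ?t"
  proof -
    have "pgf p2 0 \<le> pgf p2 (GG p2 j s)" by (rule pgf_mono) (use GG_nonneg[OF s'] GG_le1[OF s'] in auto)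
    then have "0 < pgf p2 (GG p2 j s)" using pgf0_pos[OF crit2] by linarith
    then show ?thesis using s by (simp add: GG_Suc[OF s'])
  qed
  have t1: "?t < 1"
  proof -
    have "pgf p2 (GG p2 j s) \<le> 1" by (rule pgf_le1) (use GG_nonneg[OF s'] GG_le1[OF s'] in auto)
    then have "s * pgf p2 (GG p2 j s) \<le> s * 1" using s by (intro mult_left_mono) auto
    then have "s * pgf p2 (GG p2 j s) < 1" using s by linarith
    then show ?thesis by (simp add: GG_Suc[OF s'])
  qed
  have "GG p1 (Suc j) s = s * pgf p1 (GG p1 j s)" by (simp add: GG_Suc[OF s'])
  also have "\<dots> \<le> s * pgf p1 ?t"
    by (intro mult_left_mono pgf_mono) (use Suc.IH GG_nonneg[OF s'] t1 s in auto)
  also have "\<dots> \<le> s * pgf p2 ?t"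
    using le t0 t1 s by (intro mult_left_mono) auto
  also have "\<dots> = GG p2 (Suc (Suc j)) s" by (simp add: GG_Suc[OF s'])
  finally show ?case .
qed

lemma YY_compare:
  assumes crit1: "critical_finvar p1" and crit2: "critical_finvar p2"
    and le: "\<forall>t\<in>{0<..<1}. pgf p1 t \<le> pgf p2 t"
    and s: "0 < s" "s \<le> 1"
  shows "YY p1 s \<le> YY p2 s"
proof (cases "s = 1")
  case True then show ?thesis using YY_one[OF crit1] YY_one[OF crit2] by simp
next
  case False
  then have s1: "s < 1" using s by simp
  have s': "0 \<le> s" "s \<le> 1" using s by auto
  show ?thesis unfolding YY_def[of p1]
  proof (rule suminf_le_const[OF YY_summable[OF s']])
    fix N
    have "(\<Sum>n<N. gw_size_prob p1 n * s ^ n) \<le> GG p1 N s" by (rule partial_le_GG[OF s'])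
    also have "\<dots> \<le> GG p2 (Suc N) s" by (rule GG_compare[OF crit2 le s(1) s1])
    also have "\<dots> \<le> YY p2 s" by (rule GG_le_YY[OF s'])
    finally show "(\<Sum>n<N. gw_size_prob p1 n * s ^ n) \<le> YY p2 s" .
  qed
qed

lemma scaling:
  fixes g :: "real \<Rightarrow> real" and n :: real
  assumes n: "0 < n" and g: "g \<in> borel_measurable borel" and gpos: "\<And>u. 0 < u \<Longrightarrow> 0 \<le> g u"
  shows "(\<integral>\<^sup>+x. ennreal (indicator {0<..} x * x powr \<gamma> * g (n * x)) \<partial>lborel)
       = ennreal (n powr (- \<gamma> - 1)) * (\<integral>\<^sup>+u. ennreal (indicator {0<..} u * u powr \<gamma> * g u) \<partial>lborel)"
proof -
  define F where "F u = ennreal (indicator {0<..} u * u powr \<gamma> * g u)" for u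
  have Fm: "F \<in> borel_measurable borel" unfolding F_def using g by measurable
  have "(\<integral>\<^sup>+u. F u \<partial>lborel) = ennreal \<bar>n\<bar> * (\<integral>\<^sup>+x. F (0 + n * x) \<partial>lborel)"
    by (rule nn_integral_real_affine[OF Fm]) (use n in auto)
  also have "(\<lambda>x. F (0 + n * x)) = (\<lambda>x. ennreal (n powr \<gamma>) * ennreal (indicator {0<..} x * x powr \<gamma> * g (n * x)))"
  proof
    fix x
    show "F (0 + n * x) = ennreal (n powr \<gamma>) * ennreal (indicator {0<..} x * x powr \<gamma> * g (n * x))"
    proof (cases "0 < x")
      case True
      then have "0 < n * x" using n by simp
      then show ?thesis using True n gpos[of "n * x"]
        by (simp add: F_def powr_mult ennreal_mult'[symmetric] mult_ac)
    next
      case False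
      then have "\<not> 0 < n * x" using n by (simp add: zero_less_mult_iff)
      then show ?thesis using False by (simp add: F_def)
    qed
  qed
  also have "(\<integral>\<^sup>+x. ennreal (n powr \<gamma>) * ennreal (indicator {0<..} x * x powr \<gamma> * g (n * x)) \<partial>lborel)
      = ennreal (n powr \<gamma>) * (\<integral>\<^sup>+x. ennreal (indicator {0<..} x * x powr \<gamma> * g (n * x)) \<partial>lborel)"
    by (rule nn_integral_cmult) (use g in measurable)
  finally have eq: "(\<integral>\<^sup>+u. F u \<partial>lborel) = ennreal (n * n powr \<gamma>) * (\<integral>\<^sup>+x. ennreal (indicator {0<..} x * x powr \<gamma> * g (n * x)) \<partial>lborel)"
    using n by (simp add: ennreal_mult' mult.assoc)
  have one: "ennreal (n powr (- \<gamma> - 1)) * ennreal (n * n powr \<gamma>) = 1"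
  proof -
    have e1: "n * n powr \<gamma> = n powr (\<gamma> + 1)" using n by (simp add: powr_add)
    have "n powr (- \<gamma> - 1) * (n * n powr \<gamma>) = n powr ((- \<gamma> - 1) + (\<gamma> + 1))"
      unfolding e1 by (rule powr_add[symmetric])
    also have "(- \<gamma> - 1) + (\<gamma> + 1) = 0" by simp
    finally have "n powr (- \<gamma> - 1) * (n * n powr \<gamma>) = 1" using n by simp
    then show ?thesis using n by (simp add: ennreal_mult'[symmetric])
  qed
  show ?thesis unfolding F_def[symmetric] eq mult.assoc[symmetric] one by simp
qed

lemma gamma_form:
  assumes b: "0 < (\<beta>::real)"
  shows "(\<integral>\<^sup>+u. ennreal (indicator {0<..} u * u powr (\<beta> - 1) * exp (- u)) \<partial>lborel) = ennreal (Gamma \<beta>)"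
proof -
  have "(\<lambda>u. ennreal (indicator {0<..} u * u powr (\<beta> - 1) * exp (- u)))
      = (\<lambda>t. ennreal (indicator {0..} t * t powr (\<beta> - 1) / exp t))"
  proof
    fix t :: real
    show "ennreal (indicator {0<..} t * t powr (\<beta> - 1) * exp (- t)) = ennreal (indicator {0..} t * t powr (\<beta> - 1) / exp t)"
      by (cases "t < 0"; cases "t = 0") (auto simp: exp_minus field_simps)
  qed
  then show ?thesis using Gamma_conv_nn_integral_real[OF b] by simp
qed

lemma kernel_a:
  assumes b: "0 < (\<beta>::real)" and n: "0 < (n::real)"
  shows "(\<integral>\<^sup>+x. ennreal (indicator {0<..} x * x powr (\<beta> - 1) * exp (- (n * x))) \<partial>lborel)
     = ennreal (n powr (- \<beta>) * Gamma \<beta>)"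
proof -
  have "(\<integral>\<^sup>+x. ennreal (indicator {0<..} x * x powr (\<beta> - 1) * (\<lambda>u. exp (- u)) (n * x)) \<partial>lborel)
     = ennreal (n powr (- (\<beta> - 1) - 1)) * (\<integral>\<^sup>+u. ennreal (indicator {0<..} u * u powr (\<beta> - 1) * (\<lambda>u. exp (- u)) u) \<partial>lborel)"
    by (rule scaling[OF n]) auto
  then show ?thesis using gamma_form[OF b] Gamma_real_pos[OF b] by (simp add: ennreal_mult')
qed

lemma nn_pow0:
  assumes "a > (-1::real)" "0 \<le> c"
  shows "(\<integral>\<^sup>+x. ennreal (indicator {0..c} x * x powr a) \<partial>lborel) = ennreal (c powr (a + 1) / (a + 1))"
  by (rule nn_integral_has_integral_lebesgue[OF _ has_integral_powr_from_0[OF assms]]) simp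

lemma nn_powinf:
  assumes "e < (-1::real)"
  shows "(\<integral>\<^sup>+x. ennreal (indicator {1..} x * x powr e) \<partial>lborel) = ennreal (- 1 / (e + 1))"
  using nn_integral_has_integral_lebesgue[OF _ has_integral_powr_to_inf[OF assms zero_less_one]] by simp

definition DD :: "real \<Rightarrow> ennreal" where
  "DD \<alpha> = (\<integral>\<^sup>+u. ennreal (indicator {0<..} u * u powr (- \<alpha> - 1) * (1 - exp (- u))) \<partial>lborel)"

lemma kernel_b:
  assumes n: "0 < (n::real)"
  shows "(\<integral>\<^sup>+x. ennreal (indicator {0<..} x * x powr (- \<alpha> - 1) * (1 - exp (- (n * x)))) \<partial>lborel)
     = ennreal (n powr \<alpha>) * DD \<alpha>"
proof -
  have "(\<integral>\<^sup>+x. ennreal (indicator {0<..} x * x powr (- \<alpha> - 1) * (\<lambda>u. 1 - exp (- u)) (n * x)) \<partial>lborel)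
     = ennreal (n powr (- (- \<alpha> - 1) - 1)) * (\<integral>\<^sup>+u. ennreal (indicator {0<..} u * u powr (- \<alpha> - 1) * (\<lambda>u. 1 - exp (- u)) u) \<partial>lborel)"
    by (rule scaling[OF n]) auto
  then show ?thesis by (simp add: DD_def)
qed

lemma one_minus_exp_le: "0 \<le> u \<Longrightarrow> 1 - exp (- u) \<le> (u::real)"
  using exp_ge_add_one_self[of "- u"] by linarith

lemma DD_fin:
  assumes a: "0 < \<alpha>" "\<alpha> < 1"
  shows "DD \<alpha> < \<infinity>"
proof -
  have "DD \<alpha> \<le> (\<integral>\<^sup>+u. ennreal (indicator {0..1} u * u powr (- \<alpha>)) + ennreal (indicator {1..} u * u powr (- \<alpha> - 1)) \<partial>lborel)"
    unfolding DD_def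
  proof (rule nn_integral_mono)
    fix u :: real
    have "indicator {0<..} u * u powr (- \<alpha> - 1) * (1 - exp (- u)) \<le> indicator {0..1} u * u powr (- \<alpha>) + indicator {1..} u * u powr (- \<alpha> - 1)"
    proof (cases "u \<le> 0")
      case True then show ?thesis by (auto simp: indicator_def)
    next
      case False
      show ?thesis
      proof (cases "u \<le> 1")
        case True
        have "u powr (- \<alpha> - 1) * (1 - exp (- u)) \<le> u powr (- \<alpha> - 1) * u"
          using False by (intro mult_left_mono one_minus_exp_le) auto
        also have "\<dots> = u powr (- \<alpha> - 1) * u powr 1" using False by simp
        also have "\<dots> = u powr ((- \<alpha> - 1) + 1)" by (rule powr_add[symmetric])
        also have "(- \<alpha> - 1) + 1 = - \<alpha>" by simp
        finally show ?thesis using False True by (auto simp: indicator_def) (smt (verit) exp_gt_zero)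
      next
        case u1: False
        have "u powr (- \<alpha> - 1) * (1 - exp (- u)) \<le> u powr (- \<alpha> - 1) * 1"
          by (intro mult_left_mono) auto
        then show ?thesis using False u1 by (auto simp: indicator_def)
      qed
    qed
    then show "ennreal (indicator {0<..} u * u powr (- \<alpha> - 1) * (1 - exp (- u))) \<le> ennreal (indicator {0..1} u * u powr (- \<alpha>)) + ennreal (indicator {1..} u * u powr (- \<alpha> - 1))"
      by (simp add: ennreal_plus[symmetric] del: ennreal_plus)
  qed
  also have "\<dots> = (\<integral>\<^sup>+u. ennreal (indicator {0..1} u * u powr (- \<alpha>)) \<partial>lborel) + (\<integral>\<^sup>+u. ennreal (indicator {1..} u * u powr (- \<alpha> - 1)) \<partial>lborel)"
    by (rule nn_integral_add) auto
  also have "\<dots> < \<infinity>" using a by (simp add: nn_pow0 nn_powinf)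
  finally show ?thesis .
qed

lemma DD_pos:
  assumes a: "0 < \<alpha>"
  shows "0 < DD \<alpha>"
proof -
  have "(\<integral>\<^sup>+u. ennreal (1 - exp (- 1)) * ennreal (indicator {1..} u * u powr (- \<alpha> - 1)) \<partial>lborel) \<le> DD \<alpha>"
    unfolding DD_def
  proof (rule nn_integral_mono)
    fix u :: real
    have "(1 - exp (- 1)) * (indicator {1..} u * u powr (- \<alpha> - 1)) \<le> indicator {0<..} u * u powr (- \<alpha> - 1) * (1 - exp (- u))"
    proof (cases "1 \<le> u")
      case True
      have "1 - exp (- 1) \<le> 1 - exp (- u)" using True by simp
      then have "(1 - exp (- 1)) * u powr (- \<alpha> - 1) \<le> (1 - exp (- u)) * u powr (- \<alpha> - 1)"
        by (intro mult_right_mono) auto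
      then show ?thesis using True by (auto simp: indicator_def mult_ac)
    next
      case False then show ?thesis by (auto simp: indicator_def)
    qed
    then have "ennreal ((1 - exp (- 1)) * (indicator {1..} u * u powr (- \<alpha> - 1))) \<le> ennreal (indicator {0<..} u * u powr (- \<alpha> - 1) * (1 - exp (- u)))"
      by (rule ennreal_leI)
    moreover have "ennreal ((1 - exp (- 1)) * (indicator {1..} u * u powr (- \<alpha> - 1))) = ennreal (1 - exp (- 1)) * ennreal (indicator {1..} u * u powr (- \<alpha> - 1))"
      by (rule ennreal_mult') simp
    ultimately show "ennreal (1 - exp (- 1)) * ennreal (indicator {1..} u * u powr (- \<alpha> - 1)) \<le> ennreal (indicator {0<..} u * u powr (- \<alpha> - 1) * (1 - exp (- u)))"
      by simp
  qed
  moreover have "(\<integral>\<^sup>+u. ennreal (1 - exp (- 1)) * ennreal (indicator {1..} u * u powr (- \<alpha> - 1)) \<partial>lborel)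
      = ennreal (1 - exp (- 1)) * ennreal (- 1 / ((- \<alpha> - 1) + 1))"
    by (subst nn_integral_cmult) (use a nn_powinf[of "- \<alpha> - 1"] in auto)
  moreover have "0 < ennreal (1 - exp (- 1)) * ennreal (- 1 / ((- \<alpha> - 1) + 1))"
    using a by (simp add: ennreal_mult'[symmetric])
  ultimately show ?thesis by (metis order_less_le_trans)
qed

lemma mix:
  fixes h :: "nat \<Rightarrow> real \<Rightarrow> real" and f :: "nat \<Rightarrow> real" and C :: ennreal
  assumes hm: "\<And>n. (\<lambda>x. ennreal (h n x)) \<in> borel_measurable lborel"
    and K: "\<And>n. 1 \<le> n \<Longrightarrow> (\<integral>\<^sup>+x. ennreal (h n x) \<partial>lborel) = ennreal (f n) * C"
  shows "(\<Sum>n. ennreal (gw_size_prob p n * f n)) * C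
       = (\<integral>\<^sup>+x. (\<Sum>n. ennreal (gw_size_prob p n) * ennreal (h n x)) \<partial>lborel)"
proof -
  have "(\<Sum>n. ennreal (gw_size_prob p n * f n)) * C = (\<Sum>n. ennreal (gw_size_prob p n * f n) * C)"
    by simp
  also have "\<dots> = (\<Sum>n. \<integral>\<^sup>+x. ennreal (gw_size_prob p n) * ennreal (h n x) \<partial>lborel)"
  proof (intro suminf_cong)
    fix n
    show "ennreal (gw_size_prob p n * f n) * C = (\<integral>\<^sup>+x. ennreal (gw_size_prob p n) * ennreal (h n x) \<partial>lborel)"
    proof (cases "n = 0")
      case True then show ?thesis by simp
    next
      case False
      then have "(\<integral>\<^sup>+x. ennreal (gw_size_prob p n) * ennreal (h n x) \<partial>lborel) = ennreal (gw_size_prob p n) * (ennreal (f n) * C)"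
        by (subst nn_integral_cmult) (use hm K in auto)
      then show ?thesis by (simp add: ennreal_mult' q_nonneg mult.assoc)
    qed
  qed
  also have "\<dots> = (\<integral>\<^sup>+x. (\<Sum>n. ennreal (gw_size_prob p n) * ennreal (h n x)) \<partial>lborel)"
    by (rule nn_integral_suminf[symmetric]) (use hm in measurable)
  finally show ?thesis .
qed

lemma pw_a:
  assumes w: "0 \<le> w" and s: "0 < s" "s \<le> 1"
  shows "(\<Sum>n. ennreal (gw_size_prob p n) * ennreal (w * s ^ n)) = ennreal (w * YY p s)"
proof -
  have "(\<lambda>n. gw_size_prob p n * s ^ n * w) sums (YY p s * w)"
    by (rule sums_mult2[OF YY_sums]) (use s in auto)
  then have "(\<Sum>n. ennreal (gw_size_prob p n * s ^ n * w)) = ennreal (YY p s * w)"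
    by (rule suminf_ennreal_eq[rotated]) (use w s q_nonneg in auto)
  then show ?thesis using w by (simp add: ennreal_mult'[symmetric] q_nonneg mult_ac)
qed

lemma pw_b:
  assumes crit: "critical_finvar p" and w: "0 \<le> w" and s: "0 < s" "s \<le> 1"
  shows "(\<Sum>n. ennreal (gw_size_prob p n) * ennreal (w * (1 - s ^ n))) = ennreal (w * (1 - YY p s))"
proof -
  have "(\<lambda>n. (gw_size_prob p n - gw_size_prob p n * s ^ n) * w) sums ((1 - YY p s) * w)"
    by (rule sums_mult2[OF sums_diff[OF q_sums1[OF crit] YY_sums]]) (use s in auto)
  moreover have nn: "0 \<le> (gw_size_prob p n - gw_size_prob p n * s ^ n) * w" for n
  proof -
    have "s ^ n \<le> 1" using s by (simp add: power_le_one)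
    then have "gw_size_prob p n * s ^ n \<le> gw_size_prob p n" using q_nonneg[of p n] by (simp add: mult_left_le)
    then show ?thesis using w by simp
  qed
  ultimately have "(\<Sum>n. ennreal ((gw_size_prob p n - gw_size_prob p n * s ^ n) * w)) = ennreal ((1 - YY p s) * w)"
    by (intro suminf_ennreal_eq) auto
  moreover have "ennreal (gw_size_prob p n) * ennreal (w * (1 - s ^ n)) = ennreal ((gw_size_prob p n - gw_size_prob p n * s ^ n) * w)" for n
    by (simp add: ennreal_mult'[symmetric] q_nonneg algebra_simps)
  ultimately show ?thesis by (simp add: mult_ac)
qed

lemma summable_a:
  assumes crit: "critical_finvar p" and a: "\<alpha> < 0"
  shows "summable (\<lambda>n. gw_size_prob p n * real n powr \<alpha>)"
proof (rule summable_comparison_test)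
  show "\<exists>N. \<forall>n\<ge>N. norm (gw_size_prob p n * real n powr \<alpha>) \<le> gw_size_prob p n"
  proof (intro exI allI impI)
    fix n :: nat
    have "real n powr \<alpha> \<le> 1"
    proof (cases "n = 0")
      case False
      then have "real n powr \<alpha> \<le> real n powr 0" using a by (intro powr_mono) auto
      then show ?thesis using False by simp
    qed simp
    then show "norm (gw_size_prob p n * real n powr \<alpha>) \<le> gw_size_prob p n"
      using q_nonneg[of p n] by (simp add: abs_mult mult_left_le)
  qed
qed (use q_sums1[OF crit] in \<open>simp add: sums_iff\<close>)

lemma repr_a:
  assumes crit: "critical_finvar p" and a: "\<alpha> < 0"
  shows "ennreal (gw_mu p \<alpha> * Gamma (- \<alpha>))
       = (\<integral>\<^sup>+x. ennreal (indicator {0<..} x * x powr (- \<alpha> - 1) * YY p (exp (- x))) \<partial>lborel)"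
proof -
  have b: "0 < - \<alpha>" using a by simp
  have G: "0 < Gamma (- \<alpha>)" using b by simp
  have mu0: "0 \<le> gw_mu p \<alpha>"
    unfolding gw_mu_def by (rule suminf_nonneg[OF summable_a[OF crit a]]) (simp add: q_nonneg)
  have S: "(\<Sum>n. ennreal (gw_size_prob p n * real n powr \<alpha>)) = ennreal (gw_mu p \<alpha>)"
    unfolding gw_mu_def by (rule suminf_ennreal2) (simp_all add: q_nonneg summable_a[OF crit a])
  have "ennreal (gw_mu p \<alpha> * Gamma (- \<alpha>)) = (\<Sum>n. ennreal (gw_size_prob p n * real n powr \<alpha>)) * ennreal (Gamma (- \<alpha>))"
    unfolding S using mu0 by (rule ennreal_mult')
  also have "\<dots> = (\<integral>\<^sup>+x. (\<Sum>n. ennreal (gw_size_prob p n) * ennreal (indicator {0<..} x * x powr (- \<alpha> - 1) * exp (- (real n * x)))) \<partial>lborel)"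
  proof (rule mix)
    fix n :: nat assume n: "1 \<le> n"
    show "(\<integral>\<^sup>+x. ennreal (indicator {0<..} x * x powr (- \<alpha> - 1) * exp (- (real n * x))) \<partial>lborel) = ennreal (real n powr \<alpha>) * ennreal (Gamma (- \<alpha>))"
      using kernel_a[OF b, of "real n"] n by (simp add: ennreal_mult')
  qed measurable
  also have "\<dots> = (\<integral>\<^sup>+x. ennreal (indicator {0<..} x * x powr (- \<alpha> - 1) * YY p (exp (- x))) \<partial>lborel)"
  proof (rule nn_integral_cong)
    fix x :: real
    show "(\<Sum>n. ennreal (gw_size_prob p n) * ennreal (indicator {0<..} x * x powr (- \<alpha> - 1) * exp (- (real n * x))))
        = ennreal (indicator {0<..} x * x powr (- \<alpha> - 1) * YY p (exp (- x)))"
    proof (cases "0 < x")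
      case True
      have e: "exp (- (real n * x)) = exp (- x) ^ n" for n
        using exp_of_nat_mult[of n "- x"] by simp
      show ?thesis using True pw_a[of "x powr (- \<alpha> - 1)" "exp (- x)" p]
        by (simp add: e mult.assoc)
    next
      case False then show ?thesis by simp
    qed
  qed
  finally show ?thesis .
qed

lemma part_a:
  assumes crit1: "critical_finvar p1" and crit2: "critical_finvar p2"
    and le: "\<forall>t\<in>{0<..<1}. pgf p1 t \<le> pgf p2 t" and a: "\<alpha> < 0"
  shows "gw_mu p1 \<alpha> \<le> gw_mu p2 \<alpha>"
proof -
  have G: "0 < Gamma (- \<alpha>)" using a by simp
  have mu0: "0 \<le> gw_mu p2 \<alpha>"
    unfolding gw_mu_def by (rule suminf_nonneg[OF summable_a[OF crit2 a]]) (simp add: q_nonneg)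
  have "ennreal (gw_mu p1 \<alpha> * Gamma (- \<alpha>)) \<le> ennreal (gw_mu p2 \<alpha> * Gamma (- \<alpha>))"
    unfolding repr_a[OF crit1 a] repr_a[OF crit2 a]
  proof (rule nn_integral_mono)
    fix x :: real
    show "ennreal (indicator {0<..} x * x powr (- \<alpha> - 1) * YY p1 (exp (- x))) \<le> ennreal (indicator {0<..} x * x powr (- \<alpha> - 1) * YY p2 (exp (- x)))"
    proof (cases "0 < x")
      case True
      have "YY p1 (exp (- x)) \<le> YY p2 (exp (- x))"
        by (rule YY_compare[OF crit1 crit2 le]) (use True in auto)
      then show ?thesis using True by (intro ennreal_leI mult_left_mono) auto
    qed simp
  qed
  then have "gw_mu p1 \<alpha> * Gamma (- \<alpha>) \<le> gw_mu p2 \<alpha> * Gamma (- \<alpha>)"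
    using mu0 G by (subst (asm) ennreal_le_iff) auto
  then show ?thesis using G by simp
qed

lemma repr_b:
  assumes crit: "critical_finvar p"
  shows "(\<Sum>n. ennreal (gw_size_prob p n * real n powr \<alpha>)) * DD \<alpha>
       = (\<integral>\<^sup>+x. ennreal (indicator {0<..} x * x powr (- \<alpha> - 1) * (1 - YY p (exp (- x)))) \<partial>lborel)"
proof -
  have "(\<Sum>n. ennreal (gw_size_prob p n * real n powr \<alpha>)) * DD \<alpha>
      = (\<integral>\<^sup>+x. (\<Sum>n. ennreal (gw_size_prob p n) * ennreal (indicator {0<..} x * x powr (- \<alpha> - 1) * (1 - exp (- (real n * x))))) \<partial>lborel)"
  proof (rule mix)
    fix n :: nat assume n: "1 \<le> n"
    show "(\<integral>\<^sup>+x. ennreal (indicator {0<..} x * x powr (- \<alpha> - 1) * (1 - exp (- (real n * x)))) \<partial>lborel) = ennreal (real n powr \<alpha>) * DD \<alpha>"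
      using kernel_b[of "real n" \<alpha>] n by simp
  qed measurable
  also have "\<dots> = (\<integral>\<^sup>+x. ennreal (indicator {0<..} x * x powr (- \<alpha> - 1) * (1 - YY p (exp (- x)))) \<partial>lborel)"
  proof (rule nn_integral_cong)
    fix x :: real
    show "(\<Sum>n. ennreal (gw_size_prob p n) * ennreal (indicator {0<..} x * x powr (- \<alpha> - 1) * (1 - exp (- (real n * x)))))
        = ennreal (indicator {0<..} x * x powr (- \<alpha> - 1) * (1 - YY p (exp (- x))))"
    proof (cases "0 < x")
      case True
      have e: "exp (- (real n * x)) = exp (- x) ^ n" for n
        using exp_of_nat_mult[of n "- x"] by simp
      show ?thesis using True pw_b[OF crit, of "x powr (- \<alpha> - 1)" "exp (- x)"]
        by (simp add: e mult.assoc)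
    next
      case False then show ?thesis by simp
    qed
  qed
  finally show ?thesis .
qed

lemma bound_b:
  assumes crit: "critical_finvar p" and a: "0 < \<alpha>" "\<alpha> < 1/2"
  shows "(\<integral>\<^sup>+x. ennreal (indicator {0<..} x * x powr (- \<alpha> - 1) * (1 - YY p (exp (- x)))) \<partial>lborel) < \<infinity>"
proof -
  define K where "K = KK p"
  have K0': "0 \<le> sqrt K" by (simp add: K_def KK_def)
  have "(\<integral>\<^sup>+x. ennreal (indicator {0<..} x * x powr (- \<alpha> - 1) * (1 - YY p (exp (- x)))) \<partial>lborel)
      \<le> (\<integral>\<^sup>+x. ennreal (sqrt K) * ennreal (indicator {0..1} x * x powr (- \<alpha> - 1/2)) + ennreal (indicator {1..} x * x powr (- \<alpha> - 1)) \<partial>lborel)"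
  proof (rule nn_integral_mono)
    fix x :: real
    have "indicator {0<..} x * x powr (- \<alpha> - 1) * (1 - YY p (exp (- x)))
        \<le> sqrt K * (indicator {0..1} x * x powr (- \<alpha> - 1/2)) + indicator {1..} x * x powr (- \<alpha> - 1)"
    proof (cases "0 < x")
      case False then show ?thesis by (auto simp: indicator_def)
    next
      case x0: True
      have s: "0 < exp (- x)" "exp (- x) \<le> 1" using x0 by auto
      have Y: "0 \<le> 1 - YY p (exp (- x))" "1 - YY p (exp (- x)) \<le> 1"
        using YY_le1[of "exp (- x)" p] YY_nonneg[of "exp (- x)" p] s by auto
      show ?thesis
      proof (cases "x \<le> 1")
        case True
        have K0: "0 \<le> K" by (simp add: K_def KK_def)
        have "(1 - YY p (exp (- x))) ^ 2 \<le> K * (1 - exp (- x))"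
          unfolding K_def by (rule YY_bound[OF crit s])
        also have "\<dots> \<le> K * x" using K0 x0 by (intro mult_left_mono one_minus_exp_le) auto
        finally have "1 - YY p (exp (- x)) \<le> sqrt (K * x)" by (rule real_le_rsqrt)
        also have "\<dots> = sqrt K * x powr (1/2)" using x0 by (simp add: real_sqrt_mult powr_half_sqrt)
        finally have "x powr (- \<alpha> - 1) * (1 - YY p (exp (- x))) \<le> x powr (- \<alpha> - 1) * (sqrt K * x powr (1/2))"
          by (intro mult_left_mono) auto
        also have "\<dots> = sqrt K * (x powr (- \<alpha> - 1) * x powr (1/2))" by simp
        also have "x powr (- \<alpha> - 1) * x powr (1/2) = x powr ((- \<alpha> - 1) + 1/2)"
          by (rule powr_add[symmetric])
        also have "(- \<alpha> - 1) + 1/2 = - \<alpha> - 1/2" by simp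
        finally show ?thesis using x0 True by (auto simp: indicator_def)
      next
        case False
        have "x powr (- \<alpha> - 1) * (1 - YY p (exp (- x))) \<le> x powr (- \<alpha> - 1) * 1"
          using Y by (intro mult_left_mono) auto
        then show ?thesis using x0 False by (auto simp: indicator_def)
      qed
    qed
    then show "ennreal (indicator {0<..} x * x powr (- \<alpha> - 1) * (1 - YY p (exp (- x))))
        \<le> ennreal (sqrt K) * ennreal (indicator {0..1} x * x powr (- \<alpha> - 1/2)) + ennreal (indicator {1..} x * x powr (- \<alpha> - 1))"
    proof -
      assume h: "indicator {0<..} x * x powr (- \<alpha> - 1) * (1 - YY p (exp (- x)))
        \<le> sqrt K * (indicator {0..1} x * x powr (- \<alpha> - 1/2)) + indicator {1..} x * x powr (- \<alpha> - 1)"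
      have "ennreal (indicator {0<..} x * x powr (- \<alpha> - 1) * (1 - YY p (exp (- x))))
        \<le> ennreal (sqrt K * (indicator {0..1} x * x powr (- \<alpha> - 1/2)) + indicator {1..} x * x powr (- \<alpha> - 1))"
        using h by (rule ennreal_leI)
      also have "\<dots> = ennreal (sqrt K) * ennreal (indicator {0..1} x * x powr (- \<alpha> - 1/2)) + ennreal (indicator {1..} x * x powr (- \<alpha> - 1))"
        using K0' by (subst ennreal_plus) (auto simp: ennreal_mult')
      finally show ?thesis .
    qed
  qed
  also have "\<dots> = ennreal (sqrt K) * (\<integral>\<^sup>+x. ennreal (indicator {0..1} x * x powr (- \<alpha> - 1/2)) \<partial>lborel)
      + (\<integral>\<^sup>+x. ennreal (indicator {1..} x * x powr (- \<alpha> - 1)) \<partial>lborel)"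
    by (subst nn_integral_add) (auto simp: nn_integral_cmult)
  also have "\<dots> < \<infinity>" using a by (simp add: nn_pow0 nn_powinf ennreal_mult_less_top)
  finally show ?thesis .
qed

lemma DD_real:
  assumes a: "0 < \<alpha>" "\<alpha> < 1"
  obtains d where "DD \<alpha> = ennreal d" "0 < d"
proof -
  from DD_fin[OF a] obtain d where d: "DD \<alpha> = ennreal d" "0 \<le> d"
    by (cases "DD \<alpha>") auto
  moreover have "0 < d" using DD_pos[OF a(1)] d by (cases "d = 0") auto
  ultimately show ?thesis using that by blast
qed

lemma summable_b:
  assumes crit: "critical_finvar p" and a: "0 < \<alpha>" "\<alpha> < 1/2"
  shows "summable (\<lambda>n. gw_size_prob p n * real n powr \<alpha>)"
proof (rule summable_suminf_not_top)
  obtain d where d: "DD \<alpha> = ennreal d" "0 < d" using DD_real[of \<alpha>] a by auto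
  have "(\<Sum>n. ennreal (gw_size_prob p n * real n powr \<alpha>)) * DD \<alpha> < \<infinity>"
    unfolding repr_b[OF crit] by (rule bound_b[OF crit a])
  then show "(\<Sum>n. ennreal (gw_size_prob p n * real n powr \<alpha>)) \<noteq> \<top>"
    using d by (auto simp: ennreal_mult_eq_top_iff)
qed (simp add: q_nonneg)

lemma part_b:
  assumes crit1: "critical_finvar p1" and crit2: "critical_finvar p2"
    and le: "\<forall>t\<in>{0<..<1}. pgf p1 t \<le> pgf p2 t" and a: "0 < \<alpha>" "\<alpha> < 1/2"
  shows "gw_mu p2 \<alpha> \<le> gw_mu p1 \<alpha>"
proof -
  obtain d where d: "DD \<alpha> = ennreal d" "0 < d" using DD_real[of \<alpha>] a by auto
  have S: "(\<Sum>n. ennreal (gw_size_prob p n * real n powr \<alpha>)) = ennreal (gw_mu p \<alpha>)"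
    if "critical_finvar p" for p
    unfolding gw_mu_def by (rule suminf_ennreal2) (simp_all add: q_nonneg summable_b[OF that a])
  have mu0: "0 \<le> gw_mu p1 \<alpha>"
    unfolding gw_mu_def by (rule suminf_nonneg[OF summable_b[OF crit1 a]]) (simp add: q_nonneg)
  have "ennreal (gw_mu p2 \<alpha>) * DD \<alpha> \<le> ennreal (gw_mu p1 \<alpha>) * DD \<alpha>"
    unfolding S[OF crit1, symmetric] S[OF crit2, symmetric] repr_b[OF crit1] repr_b[OF crit2]
  proof (rule nn_integral_mono)
    fix x :: real
    show "ennreal (indicator {0<..} x * x powr (- \<alpha> - 1) * (1 - YY p2 (exp (- x)))) \<le> ennreal (indicator {0<..} x * x powr (- \<alpha> - 1) * (1 - YY p1 (exp (- x))))"
    proof (cases "0 < x")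
      case True
      have "YY p1 (exp (- x)) \<le> YY p2 (exp (- x))"
        by (rule YY_compare[OF crit1 crit2 le]) (use True in auto)
      then show ?thesis using True by (intro ennreal_leI mult_left_mono) auto
    qed simp
  qed
  then have "ennreal (gw_mu p2 \<alpha> * d) \<le> ennreal (gw_mu p1 \<alpha> * d)"
    using d mu0 by (simp add: ennreal_mult'')
  then have "gw_mu p2 \<alpha> * d \<le> gw_mu p1 \<alpha> * d"
    using mu0 d by (subst (asm) ennreal_le_iff) auto
  then show ?thesis using d by simp
qed

lemma ln_bound:
  assumes x: "1 \<le> (x::real)" and a: "0 < a"
  shows "ln x \<le> x powr a / a"
proof -
  have "ln (x powr a) = a * ln x" using x by (simp add: ln_powr)
  moreover have "ln (x powr a) \<le> x powr a - 1" using x by (intro ln_le_minus_one) simp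
  ultimately have "a * ln x \<le> x powr a" by simp
  then show ?thesis using a by (simp add: field_simps)
qed

lemma exp_bound2:
  assumes y: "0 \<le> (y::real)"
  shows "exp y - 1 - y \<le> y ^ 2 * exp y"
proof -
  have "1 - y \<le> exp (- y)" using exp_ge_add_one_self[of "- y"] by simp
  then have "exp y * (1 - y) \<le> exp y * exp (- y)" by (intro mult_left_mono) auto
  then have "exp y - 1 \<le> y * exp y" by (simp add: exp_minus field_simps)
  then have "exp y - 1 - y \<le> y * (exp y - 1)" by (simp add: algebra_simps)
  also have "\<dots> \<le> y * (y * exp y)" using \<open>exp y - 1 \<le> y * exp y\<close> y by (intro mult_left_mono) auto
  finally show ?thesis by (simp add: power2_eq_square mult_ac)
qed

lemma term_bounds:
  assumes x: "1 \<le> (x::real)" and a: "0 < \<alpha>" "\<alpha> \<le> 1/8"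
  shows "ln x \<le> (x powr \<alpha> - 1) / \<alpha>"
    and "(x powr \<alpha> - 1) / \<alpha> \<le> ln x + \<alpha> * (256 * x powr (1/4))"
proof -
  define L where "L = ln x"
  have L0: "0 \<le> L" using x by (simp add: L_def)
  have xa: "x powr \<alpha> = exp (\<alpha> * L)" using x by (simp add: powr_def L_def mult_ac)
  have "1 + \<alpha> * L \<le> exp (\<alpha> * L)" by (rule exp_ge_add_one_self)
  then show "ln x \<le> (x powr \<alpha> - 1) / \<alpha>" using a by (simp add: xa L_def field_simps)
  have "exp (\<alpha> * L) - 1 - \<alpha> * L \<le> (\<alpha> * L) ^ 2 * exp (\<alpha> * L)"
    by (rule exp_bound2) (use a L0 in simp)
  then have "(x powr \<alpha> - 1) / \<alpha> - L \<le> \<alpha> * (L ^ 2 * x powr \<alpha>)"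
    using a by (simp add: xa field_simps power2_eq_square)
  moreover have "L ^ 2 * x powr \<alpha> \<le> 256 * x powr (1/4)"
  proof -
    have "L \<le> x powr (1/16) / (1/16)" unfolding L_def by (rule ln_bound[OF x]) simp
    then have "L \<le> 16 * x powr (1/16)" by simp
    then have "L ^ 2 \<le> (16 * x powr (1/16)) ^ 2" using L0 by (intro power_mono) auto
    also have "\<dots> = 256 * x powr (1/8)"
      using x by (simp add: power2_eq_square powr_add[symmetric])
    finally have L2: "L ^ 2 \<le> 256 * x powr (1/8)" .
    have xp: "x powr \<alpha> \<le> x powr (1/8)" using x a by (intro powr_mono) auto
    have "L ^ 2 * x powr \<alpha> \<le> (256 * x powr (1/8)) * x powr (1/8)"
      using L2 xp by (intro mult_mono) auto
    also have "\<dots> = 256 * x powr (1/4)" using x by (simp add: powr_add[symmetric])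
    finally show ?thesis .
  qed
  ultimately have "(x powr \<alpha> - 1) / \<alpha> - L \<le> \<alpha> * (256 * x powr (1/4))"
    using a by (smt (verit) mult_left_mono)
  then show "(x powr \<alpha> - 1) / \<alpha> \<le> ln x + \<alpha> * (256 * x powr (1/4))" by (simp add: L_def)
qed

lemma summable_ln:
  assumes crit: "critical_finvar p"
  shows "summable (\<lambda>n. gw_size_prob p n * ln (real n))"
proof (rule summable_comparison_test)
  show "\<exists>N. \<forall>n\<ge>N. norm (gw_size_prob p n * ln (real n)) \<le> 4 * (gw_size_prob p n * real n powr (1/4))"
  proof (intro exI allI impI)
    fix n :: nat assume "0 \<le> n"
    show "norm (gw_size_prob p n * ln (real n)) \<le> 4 * (gw_size_prob p n * real n powr (1/4))"
    proof (cases "n = 0")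
      case False
      then have n1: "1 \<le> real n" by simp
      have "ln (real n) \<le> real n powr (1/4) / (1/4)" by (rule ln_bound[OF n1]) simp
      then have "gw_size_prob p n * ln (real n) \<le> gw_size_prob p n * (4 * real n powr (1/4))"
        using q_nonneg[of p n] by (intro mult_left_mono) auto
      moreover have "0 \<le> gw_size_prob p n * ln (real n)" using n1 q_nonneg[of p n] by simp
      ultimately show ?thesis by (simp add: mult_ac)
    qed simp
  qed
qed (intro summable_mult summable_b[OF crit]; simp)

lemma diff_sums:
  assumes crit: "critical_finvar p" and a: "0 < \<alpha>" "\<alpha> < 1/2"
  shows "(\<lambda>n. gw_size_prob p n * ((real n powr \<alpha> - 1) / \<alpha>)) sums ((gw_mu p \<alpha> - 1) / \<alpha>)"
proof -
  have "(\<lambda>n. (gw_size_prob p n * real n powr \<alpha> - gw_size_prob p n) / \<alpha>) sums ((gw_mu p \<alpha> - 1) / \<alpha>)"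
    unfolding gw_mu_def
    by (intro sums_divide sums_diff summable_sums summable_b[OF crit a] q_sums1[OF crit])
  then show ?thesis by (simp add: algebra_simps diff_divide_distrib)
qed

lemma part_c:
  assumes crit1: "critical_finvar p1" and crit2: "critical_finvar p2"
    and le: "\<forall>t\<in>{0<..<1}. pgf p1 t \<le> pgf p2 t"
  shows "gw_mu' p2 \<le> gw_mu' p1"
proof -
  define M where "M = 256 * gw_mu p1 (1/4)"
  have key: "gw_mu' p2 \<le> gw_mu' p1 + \<alpha> * M" if a: "0 < \<alpha>" "\<alpha> \<le> 1/8" for \<alpha>
  proof -
    have a': "0 < \<alpha>" "\<alpha> < 1/2" using a by auto
    have "gw_mu' p2 \<le> (gw_mu p2 \<alpha> - 1) / \<alpha>"
      unfolding gw_mu'_def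
    proof (rule sums_le[OF _ summable_sums[OF summable_ln[OF crit2]] diff_sums[OF crit2 a']])
      fix n :: nat
      show "gw_size_prob p2 n * ln (real n) \<le> gw_size_prob p2 n * ((real n powr \<alpha> - 1) / \<alpha>)"
      proof (cases "n = 0")
        case False
        then have n1: "1 \<le> real n" by simp
        show ?thesis using term_bounds(1)[OF n1 a] q_nonneg[of p2 n] by (intro mult_left_mono) auto
      qed simp
    qed
    also have "\<dots> \<le> (gw_mu p1 \<alpha> - 1) / \<alpha>"
      using part_b[OF crit1 crit2 le a'] a by (simp add: divide_right_mono)
    also have "\<dots> \<le> gw_mu' p1 + \<alpha> * M"
    proof -
      have s2: "(\<lambda>n. gw_size_prob p1 n * ln (real n) + \<alpha> * 256 * (gw_size_prob p1 n * real n powr (1/4)))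
          sums (gw_mu' p1 + \<alpha> * 256 * gw_mu p1 (1/4))"
        unfolding gw_mu'_def gw_mu_def
        by (intro sums_add sums_mult summable_sums summable_ln[OF crit1] summable_b[OF crit1]) auto
      have "(gw_mu p1 \<alpha> - 1) / \<alpha> \<le> gw_mu' p1 + \<alpha> * 256 * gw_mu p1 (1/4)"
      proof (rule sums_le[OF _ diff_sums[OF crit1 a'] s2])
        fix n :: nat
        show "gw_size_prob p1 n * ((real n powr \<alpha> - 1) / \<alpha>) \<le> gw_size_prob p1 n * ln (real n) + \<alpha> * 256 * (gw_size_prob p1 n * real n powr (1/4))"
        proof (cases "n = 0")
          case False
          then have n1: "1 \<le> real n" by simp
          have "gw_size_prob p1 n * ((real n powr \<alpha> - 1) / \<alpha>) \<le> gw_size_prob p1 n * (ln (real n) + \<alpha> * (256 * real n powr (1/4)))"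
            using term_bounds(2)[OF n1 a] q_nonneg[of p1 n] by (intro mult_left_mono) auto
          then show ?thesis by (simp add: algebra_simps)
        qed simp
      qed
      then show ?thesis by (simp add: M_def mult_ac)
    qed
    finally show ?thesis .
  qed
  show ?thesis
  proof (rule ccontr)
    assume "\<not> gw_mu' p2 \<le> gw_mu' p1"
    then have d: "0 < gw_mu' p2 - gw_mu' p1" by simp
    define \<alpha> where "\<alpha> = min (1/8) ((gw_mu' p2 - gw_mu' p1) / (2 * (\<bar>M\<bar> + 1)))"
    have a1: "0 < \<alpha>" using d unfolding \<alpha>_def by (simp add: min_def)
    have a2: "\<alpha> \<le> 1/8" unfolding \<alpha>_def by (rule min.cobounded1)
    note a = a1 a2
    have "\<alpha> * M \<le> \<alpha> * \<bar>M\<bar>" using a by (intro mult_left_mono) auto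
    also have "\<dots> \<le> ((gw_mu' p2 - gw_mu' p1) / (2 * (\<bar>M\<bar> + 1))) * \<bar>M\<bar>"
      by (intro mult_right_mono) (auto simp: \<alpha>_def)
    also have "\<dots> < gw_mu' p2 - gw_mu' p1"
    proof -
      have "\<bar>M\<bar> / (2 * (\<bar>M\<bar> + 1)) < 1"
        by (simp add: field_simps)
      then have "(gw_mu' p2 - gw_mu' p1) * (\<bar>M\<bar> / (2 * (\<bar>M\<bar> + 1))) < (gw_mu' p2 - gw_mu' p1) * 1"
        using d by (intro mult_strict_left_mono) auto
      then show ?thesis by (simp add: field_simps)
    qed
    finally show False using key[OF a] by linarith
  qed
qed

theorem theorem6p3:
  fixes p1 p2 :: "nat pmf"
  assumes "critical_finvar p1" and "critical_finvar p2"
    and "\<forall>t\<in>{0<..<1}. pgf p1 t \<le> pgf p2 t"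
  shows "(\<forall>\<alpha>::real. \<alpha> < 0 \<longrightarrow> gw_mu p1 \<alpha> \<le> gw_mu p2 \<alpha>)
       \<and> (\<forall>\<alpha>::real. 0 < \<alpha> \<and> \<alpha> < 1/2 \<longrightarrow> gw_mu p1 \<alpha> \<ge> gw_mu p2 \<alpha>)
       \<and> gw_mu' p1 \<ge> gw_mu' p2"
  using part_a[OF assms] part_b[OF assms] part_c[OF assms] by blast

end
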